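(* Let $K$ be a simplicial complex and $W\subset K$ a subcomplex. Let $$Z:=\{\tau\in K:\ \tau\cup\sigma\notin K\text{ for all }\sigma\in K\setminus W\}.$$ Then $O_K(Z)=Z$ and $Z=W\setminus\overline{K\setminus W}$.
   Context: A simplicial complex $K$ on a vertex set $S$ is a collection of subsets of $S$ (faces) closed under taking subsets (including $\varnothing$). For a subset $Z\subset K$, the closure $\overline Z$ is the smallest subcomplex of $K$ containing $Z$ (all subsets of elements of $Z$), and the open neighborhood is $O_K(Z)=\{\sigma\in K:\ \sigma\supseteq\tau\text{ for some }\tau\in Z\}$. *)

theory Defs
  imports Main
begin

definition simplicial_complex :: "'a set \<Rightarrow> 'a set set \<Rightarrow> bool" where
  "simplicial_complex S K \<longleftrightarrow> K \<subseteq> Pow S \<and> {} \<in> K \<and> (\<forall>\<sigma>\<in>K. \<forall>\<tau>. \<tau> \<subseteq> \<sigma> \<longrightarrow> \<tau> \<in> K)"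

definition subcomplex :: "'a set \<Rightarrow> 'a set set \<Rightarrow> 'a set set \<Rightarrow> bool" where
  "subcomplex S K W \<longleftrightarrow> W \<subseteq> K \<and> simplicial_complex S W"

definition cl :: "'a set set \<Rightarrow> 'a set set" where
  "cl Z = {\<rho>. \<exists>\<tau>\<in>Z. \<rho> \<subseteq> \<tau>}"

definition open_nbhd :: "'a set set \<Rightarrow> 'a set set \<Rightarrow> 'a set set" where
  "open_nbhd K Z = {\<sigma>\<in>K. \<exists>\<tau>\<in>Z. \<tau> \<subseteq> \<sigma>}"

end

theory Submission
  imports Defs
begin

theorem lemma3p4:
  fixes S :: "'a set" and K W :: "'a set set"
  assumes "simplicial_complex S K"
    and "subcomplex S K W"
  defines "Z \<equiv> {\<tau>\<in>K. \<forall>\<sigma>\<in>K - W. \<tau> \<union> \<sigma> \<notin> K}"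
  shows "open_nbhd K Z = Z \<and> Z = W - cl (K - W)"
proof -
  have Kd: "\<And>s t. s \<in> K \<Longrightarrow> t \<subseteq> s \<Longrightarrow> t \<in> K"
    using assms(1) unfolding simplicial_complex_def by blast
  have Wd: "\<And>s t. s \<in> W \<Longrightarrow> t \<subseteq> s \<Longrightarrow> t \<in> W"
    using assms(2) unfolding subcomplex_def simplicial_complex_def by blast
  have WK: "W \<subseteq> K" using assms(2) unfolding subcomplex_def by blast
  have 1: "open_nbhd K Z = Z"
  proof
    show "open_nbhd K Z \<subseteq> Z"
    proof
      fix s assume "s \<in> open_nbhd K Z"
      then obtain t where s: "s \<in> K" "t \<in> Z" "t \<subseteq> s" unfolding open_nbhd_def by blast
      have "\<forall>r\<in>K - W. s \<union> r \<notin> K"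
      proof (intro ballI notI)
        fix r assume "r \<in> K - W" "s \<union> r \<in> K"
        then have "t \<union> r \<in> K" using Kd[of "s \<union> r" "t \<union> r"] s(3) by blast
        with s(2) \<open>r \<in> K - W\<close> show False unfolding Z_def by blast
      qed
      with s(1) show "s \<in> Z" unfolding Z_def by blast
    qed
    show "Z \<subseteq> open_nbhd K Z" unfolding open_nbhd_def Z_def by blast
  qed
  have 2: "Z = W - cl (K - W)"
  proof
    show "Z \<subseteq> W - cl (K - W)"
    proof
      fix t assume t: "t \<in> Z"
      have "t \<in> W"
      proof (rule ccontr)
        assume "t \<notin> W"
        with t have a: "t \<in> K - W" unfolding Z_def by auto
        with t have "t \<union> t \<notin> K" unfolding Z_def by blast
        with a show False by simp
      qed
      moreover have "t \<notin> cl (K - W)"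
      proof
        assume "t \<in> cl (K - W)"
        then obtain s where "s \<in> K - W" "t \<subseteq> s" unfolding cl_def by blast
        then have "t \<union> s = s" by blast
        moreover have "\<forall>r\<in>K - W. t \<union> r \<notin> K" using t unfolding Z_def by blast
        then have "t \<union> s \<notin> K" using \<open>s \<in> K - W\<close> by blast
        with \<open>t \<union> s = s\<close> \<open>s \<in> K - W\<close> show False by simp
      qed
      ultimately show "t \<in> W - cl (K - W)" by blast
    qed
    show "W - cl (K - W) \<subseteq> Z"
    proof
      fix t assume t: "t \<in> W - cl (K - W)"
      have "\<forall>s\<in>K - W. t \<union> s \<notin> K"
      proof (intro ballI notI)
        fix s assume s: "s \<in> K - W" "t \<union> s \<in> K"
        have "t \<union> s \<notin> W" using Wd[of "t \<union> s" s] s by blast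
        then have "t \<in> cl (K - W)" using s unfolding cl_def by blast
        with t show False by blast
      qed
      with t WK show "t \<in> Z" unfolding Z_def by blast
    qed
  qed
  from 1 2 show ?thesis by blast
qed

end
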